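(* Let $G=(X,\Sigma,\longrightarrow,X_0)$ and $R=(Z,\Sigma,\longrightarrow,Z_0)$ be automata. For any $\Sigma_{ucr}$-controllability set $E$ from $G$ to $R$, $\mathcal{A}(E)\in\mathit{SPR}(G,R)$; i.e., $\mathcal{A}(E)$ is $\Sigma_{uc}$-admissible w.r.t. $G$ and $\mathcal{A}(E)\|G\sqsubseteq_{cc}R$.
   Context: An automaton is a 4-tuple $A=(Q,\Sigma,\longrightarrow,Q_0)$ with state set $Q$, finite event set $\Sigma$, ${\longrightarrow}\subseteq Q\times\Sigma\times Q$ and $\emptyset\neq Q_0\subseteq Q$. Write $q\xrightarrow{\sigma}q'$ for $(q,\sigma,q')\in{\longrightarrow}$, $q\xrightarrow{\sigma}$ if some such $q'$ exists; extend to strings. A state is reachable if it is reached from an initial state by some string. Events are partitioned into uncontrollable $\Sigma_{uc}$ and controllable $\Sigma_c$; $\Sigma_r\subseteq\Sigma$ is a fixed set of required events. For a supervisor $S=(Y,\Sigma,\longrightarrow,Y_0)$, $S\|G=(Y\times X,\Sigma,\longrightarrow,Y_0\times X_0)$ with $(y,x)\xrightarrow{\sigma}(y',x')$ iff $y\xrightarrow{\sigma}y'$ and $x\xrightarrow{\sigma}x'$. $S$ is $\Sigma_{uc}$-admissible w.r.t. $G$ if for every reachable $(y,x)$ of $S\|G$ and $\sigma\in\Sigma_{uc}$, $x\xrightarrow{\sigma}$ implies $(y,x)\xrightarrow{\sigma}$. For automata $A_1,A_2$ with state sets $Q_1,Q_2$ and initial sets $Q_{01},Q_{02}$, $\Phi\subseteq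 Q_1\times Q_2$ is a cc-simulation if (initial state) every $q_0\in Q_{01}$ has $p_0\in Q_{02}$ with $(q_0,p_0)\in\Phi$; (forward) for $(q,p)\in\Phi$, $\sigma\in\Sigma$, $q\xrightarrow{\sigma}q'$ there is $p'$ with $p\xrightarrow{\sigma}p'$, $(q',p')\in\Phi$; ($\Sigma_r$-backward) for $(q,p)\in\Phi$, $\sigma\in\Sigma_r$, $p\xrightarrow{\sigma}p'$ there is $q'$ with $q\xrightarrow{\sigma}q'$, $(q',p')\in\Phi$. $A_1\sqsubseteq_{cc}A_2$ means one exists. $\mathit{SPR}(G,R)$ is the set of $\Sigma_{uc}$-admissible supervisors $S$ with $S\|G\sqsubseteq_{cc}R$. For $W,W'\subseteq X\times Z$: $\mathit{match}_{G,R}(W,\sigma,W')$ iff for all $(x,z)\in W$ and $x\xrightarrow{\sigma}x'$ there is $z'$ with $z\xrightarrow{\sigma}z'$ and $(x',z')\in W'$. $E\subseteq\wp(X\times Z)$ is a $\Sigma_{ucr}$-controllability set from $G$ to $R$ if: (istate) some $W_0\in E$ satisfies $\forall x_0\in X_0\,\exists z_0\in Z_0\,((x_0,z_0)\in W_0)$; (a) for every $W\in E$, $\sigma\in\Sigma_{uc}$ there is $W'\in E$ with $\mathit{match}_{G,R}(W,\sigma,W')$; (b) for every $W\in E$, $(x,z)\in W$, $\sigma\in\Sigma_r$, $z\xrightarrow{\sigma}z'$, there exist $x'$, $W'\in E$ with $x\xrightarrow{\sigma}x'$, $(x',z')\in W'$, $\mathit{match}_{G,R}(W,\sigma,W')$.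 For such $E$, $E^*=\bigcup_{\widetilde W\in E}\wp(\widetilde W)$, $\mathrm{Succ}_\sigma(W)=\bigcup_{(x,z)\in W}\{x':x\xrightarrow{\sigma}x'\}\times\{z':z\xrightarrow{\sigma}z'\}$, and $\mathcal{A}(E)=(E^*,\Sigma,\longrightarrow,I_E)$ with $I_E=\{W_0\in E^*:\forall x_0\in X_0\,\exists z_0\in Z_0\,((x_0,z_0)\in W_0)\text{ and }W_0\subseteq X_0\times Z_0\}$ and $W\xrightarrow{\sigma}W'$ iff (i) there exist $(x,z)\in W$, $(x',z')\in W'$ with $x\xrightarrow{\sigma}x'$, $z\xrightarrow{\sigma}z'$; (ii) $\mathit{match}_{G,R}(W,\sigma,W')$; (iii) $W'\subseteq\mathrm{Succ}_\sigma(W)$. *)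

theory Defs
  imports Main
begin

record ('q, 'e) automaton =
  states :: "'q set"
  trans  :: "('q \<times> 'e \<times> 'q) set"
  init   :: "'q set"

definition is_automaton :: "'e set \<Rightarrow> ('q, 'e) automaton \<Rightarrow> bool" where
  "is_automaton Evs A \<longleftrightarrow> finite Evs \<and> init A \<noteq> {} \<and> init A \<subseteq> states A \<and>
     trans A \<subseteq> states A \<times> Evs \<times> states A"

inductive reachable :: "('q, 'e) automaton \<Rightarrow> 'q \<Rightarrow> bool" for A where
  reach_init: "q \<in> init A \<Longrightarrow> reachable A q"
| reach_step: "reachable A q \<Longrightarrow> (q, \<sigma>, q') \<in> trans A \<Longrightarrow> reachable A q'"

definition sync :: "('y, 'e) automaton \<Rightarrow> ('x, 'e) automaton \<Rightarrow> ('y \<times> 'x, 'e) automaton" where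
  "sync S G = \<lparr> states = states S \<times> states G,
     trans = {((y, x), \<sigma>, (y', x')). (y, \<sigma>, y') \<in> trans S \<and> (x, \<sigma>, x') \<in> trans G},
     init = init S \<times> init G \<rparr>"

definition admissible :: "'e set \<Rightarrow> ('y, 'e) automaton \<Rightarrow> ('x, 'e) automaton \<Rightarrow> bool" where
  "admissible Evs_uc S G \<longleftrightarrow>
     (\<forall>y x. reachable (sync S G) (y, x) \<longrightarrow>
        (\<forall>\<sigma>\<in>Evs_uc. (\<exists>x'. (x, \<sigma>, x') \<in> trans G) \<longrightarrow>
            (\<exists>p'. ((y, x), \<sigma>, p') \<in> trans (sync S G))))"

definition cc_simulation :: "'e set \<Rightarrow> 'e set \<Rightarrow> ('q1, 'e) automaton \<Rightarrow> ('q2, 'e) automaton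
    \<Rightarrow> ('q1 \<times> 'q2) set \<Rightarrow> bool" where
  "cc_simulation Evs Evs_r A1 A2 \<Phi> \<longleftrightarrow>
     (\<forall>q0\<in>init A1. \<exists>p0\<in>init A2. (q0, p0) \<in> \<Phi>) \<and>
     (\<forall>(q, p)\<in>\<Phi>. \<forall>\<sigma>\<in>Evs. \<forall>q'. (q, \<sigma>, q') \<in> trans A1 \<longrightarrow>
        (\<exists>p'. (p, \<sigma>, p') \<in> trans A2 \<and> (q', p') \<in> \<Phi>)) \<and>
     (\<forall>(q, p)\<in>\<Phi>. \<forall>\<sigma>\<in>Evs_r. \<forall>p'. (p, \<sigma>, p') \<in> trans A2 \<longrightarrow>
        (\<exists>q'. (q, \<sigma>, q') \<in> trans A1 \<and> (q', p') \<in> \<Phi>))"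

definition cc_le :: "'e set \<Rightarrow> 'e set \<Rightarrow> ('q1, 'e) automaton \<Rightarrow> ('q2, 'e) automaton \<Rightarrow> bool" where
  "cc_le Evs Evs_r A1 A2 \<longleftrightarrow> (\<exists>\<Phi>. cc_simulation Evs Evs_r A1 A2 \<Phi>)"

definition SPR :: "'e set \<Rightarrow> 'e set \<Rightarrow> 'e set \<Rightarrow> ('x, 'e) automaton \<Rightarrow> ('z, 'e) automaton
    \<Rightarrow> ('y, 'e) automaton \<Rightarrow> bool" where
  "SPR Evs Evs_uc Evs_r G R S \<longleftrightarrow>
     is_automaton Evs S \<and> admissible Evs_uc S G \<and> cc_le Evs Evs_r (sync S G) R"

definition match :: "('x, 'e) automaton \<Rightarrow> ('z, 'e) automaton \<Rightarrow> ('x \<times> 'z) set \<Rightarrow> 'e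
    \<Rightarrow> ('x \<times> 'z) set \<Rightarrow> bool" where
  "match G R W \<sigma> W' \<longleftrightarrow>
     (\<forall>(x, z)\<in>W. \<forall>x'. (x, \<sigma>, x') \<in> trans G \<longrightarrow> (\<exists>z'. (z, \<sigma>, z') \<in> trans R \<and> (x', z') \<in> W'))"

definition ctrl_set :: "'e set \<Rightarrow> 'e set \<Rightarrow> ('x, 'e) automaton \<Rightarrow> ('z, 'e) automaton
    \<Rightarrow> ('x \<times> 'z) set set \<Rightarrow> bool" where
  "ctrl_set Evs_uc Evs_r G R E \<longleftrightarrow>
     E \<subseteq> Pow (states G \<times> states R) \<and>
     (\<exists>W0\<in>E. \<forall>x0\<in>init G. \<exists>z0\<in>init R. (x0, z0) \<in> W0) \<and>
     (\<forall>W\<in>E. \<forall>\<sigma>\<in>Evs_uc. \<exists>W'\<in>E. match G R W \<sigma> W') \<and>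
     (\<forall>W\<in>E. \<forall>(x, z)\<in>W. \<forall>\<sigma>\<in>Evs_r. \<forall>z'. (z, \<sigma>, z') \<in> trans R \<longrightarrow>
        (\<exists>x' W'. (x, \<sigma>, x') \<in> trans G \<and> W' \<in> E \<and> (x', z') \<in> W' \<and> match G R W \<sigma> W'))"

definition Succ :: "('x, 'e) automaton \<Rightarrow> ('z, 'e) automaton \<Rightarrow> 'e \<Rightarrow> ('x \<times> 'z) set \<Rightarrow> ('x \<times> 'z) set" where
  "Succ G R \<sigma> W = (\<Union>(x, z)\<in>W. {x'. (x, \<sigma>, x') \<in> trans G} \<times> {z'. (z, \<sigma>, z') \<in> trans R})"

definition AE :: "'e set \<Rightarrow> ('x, 'e) automaton \<Rightarrow> ('z, 'e) automaton \<Rightarrow> ('x \<times> 'z) set set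
    \<Rightarrow> (('x \<times> 'z) set, 'e) automaton" where
  "AE Evs G R E =
    (let Estar = (\<Union>W\<in>E. Pow W) in
     \<lparr> states = Estar,
       trans = {(W, \<sigma>, W'). W \<in> Estar \<and> W' \<in> Estar \<and> \<sigma> \<in> Evs \<and>
                 (\<exists>x z x' z'. (x, z) \<in> W \<and> (x', z') \<in> W' \<and> (x, \<sigma>, x') \<in> trans G \<and> (z, \<sigma>, z') \<in> trans R) \<and>
                 match G R W \<sigma> W' \<and> W' \<subseteq> Succ G R \<sigma> W},
       init = {W0 \<in> Estar. (\<forall>x0\<in>init G. \<exists>z0\<in>init R. (x0, z0) \<in> W0) \<and> W0 \<subseteq> init G \<times> init R} \<rparr>)"

end

theory Submission
  imports Defs
begin

lemma AE_states: "states (AE Evs G R E) = (\<Union>W\<in>E. Pow W)"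
  by (simp add: AE_def Let_def)

lemma AE_init: "init (AE Evs G R E) = {W0 \<in> (\<Union>W\<in>E. Pow W). (\<forall>x0\<in>init G. \<exists>z0\<in>init R. (x0, z0) \<in> W0) \<and> W0 \<subseteq> init G \<times> init R}"
  by (simp add: AE_def Let_def)

lemma AE_trans: "(W, \<sigma>, W') \<in> trans (AE Evs G R E) \<longleftrightarrow> W \<in> (\<Union>W\<in>E. Pow W) \<and> W' \<in> (\<Union>W\<in>E. Pow W) \<and> \<sigma> \<in> Evs \<and>
                 (\<exists>x z x' z'. (x, z) \<in> W \<and> (x', z') \<in> W' \<and> (x, \<sigma>, x') \<in> trans G \<and> (z, \<sigma>, z') \<in> trans R) \<and>
                 match G R W \<sigma> W' \<and> W' \<subseteq> Succ G R \<sigma> W"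
  by (simp add: AE_def Let_def)

lemma sync_trans: "(p, \<sigma>, p') \<in> trans (sync S G) \<longleftrightarrow> (fst p, \<sigma>, fst p') \<in> trans S \<and> (snd p, \<sigma>, snd p') \<in> trans G"
  by (cases p; cases p'; simp add: sync_def)

lemma sync_init: "init (sync S G) = init S \<times> init G"
  by (simp add: sync_def)

lemma restrict_match:
  assumes "match G R Wt \<sigma> W''" "W \<subseteq> Wt"
  shows "match G R W \<sigma> (W'' \<inter> Succ G R \<sigma> W)"
  using assms unfolding match_def Succ_def by fastforce

lemma reach_inv:
  assumes "reachable (sync (AE Evs G R E) G) p"
  shows "fst p \<in> (\<Union>W\<in>E. Pow W) \<and> (\<exists>z. (snd p, z) \<in> fst p)"
  using assms
proof induction
  case (reach_init q)
  then show ?case by (cases q) (auto simp: sync_init AE_init)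
next
  case (reach_step q \<sigma> q')
  then show ?case
  proof (cases q; cases q')
    fix a b aa ba assume e: "q = (a, b)" "q' = (aa, ba)"
    from reach_step e obtain z where "(b, z) \<in> a" by auto
    moreover have "(a, \<sigma>, aa) \<in> trans (AE Evs G R E)" "(b, \<sigma>, ba) \<in> trans G"
      using reach_step e by (auto simp: sync_trans)
    ultimately have "\<exists>z'. (ba, z') \<in> aa" "aa \<in> (\<Union>W\<in>E. Pow W)"
      unfolding AE_trans match_def by blast+
    then show ?thesis using e by simp
  qed
qed

theorem lemma3:
  fixes Evs Evs_uc Evs_r :: "'e set"
    and G :: "('x, 'e) automaton" and R :: "('z, 'e) automaton"
    and E :: "('x \<times> 'z) set set"
  assumes "is_automaton Evs G" and "is_automaton Evs R"
    and "Evs_uc \<subseteq> Evs" and "Evs_r \<subseteq> Evs"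
    and "ctrl_set Evs_uc Evs_r G R E"
  shows "SPR Evs Evs_uc Evs_r G R (AE Evs G R E)"
proof -
  let ?S = "AE Evs G R E"
  let ?Es = "\<Union>W\<in>E. Pow W"
  have c: "\<exists>W0\<in>E. \<forall>x0\<in>init G. \<exists>z0\<in>init R. (x0, z0) \<in> W0"
    "\<forall>W\<in>E. \<forall>\<sigma>\<in>Evs_uc. \<exists>W'\<in>E. match G R W \<sigma> W'"
    "\<forall>W\<in>E. \<forall>(x, z)\<in>W. \<forall>\<sigma>\<in>Evs_r. \<forall>z'. (z, \<sigma>, z') \<in> trans R \<longrightarrow>
        (\<exists>x' W'. (x, \<sigma>, x') \<in> trans G \<and> W' \<in> E \<and> (x', z') \<in> W' \<and> match G R W \<sigma> W')"
    using assms(5) unfolding ctrl_set_def by blast+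
  have aut: "is_automaton Evs ?S"
  proof -
    from c(1) obtain W0 where W0: "W0 \<in> E" "\<forall>x0\<in>init G. \<exists>z0\<in>init R. (x0, z0) \<in> W0" by blast
    have "W0 \<inter> (init G \<times> init R) \<in> init ?S"
      using W0 by (auto simp: AE_init)
    then have "init ?S \<noteq> {}" by blast
    moreover have "init ?S \<subseteq> states ?S" by (auto simp: AE_init AE_states)
    moreover have "trans ?S \<subseteq> states ?S \<times> Evs \<times> states ?S"
    proof
      fix t assume "t \<in> trans ?S"
      then show "t \<in> states ?S \<times> Evs \<times> states ?S"
        by (cases t) (auto simp: AE_trans AE_states simp del: UN_iff Pow_iff)
    qed
    ultimately show ?thesis using assms(1) by (simp add: is_automaton_def)
  qed
  have adm: "admissible Evs_uc ?S G"
    unfolding admissible_def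
  proof (intro allI impI ballI)
    fix W x \<sigma>
    assume r: "reachable (sync ?S G) (W, x)" and s: "\<sigma> \<in> Evs_uc" and "\<exists>x'. (x, \<sigma>, x') \<in> trans G"
    then obtain x' where xx: "(x, \<sigma>, x') \<in> trans G" by blast
    from reach_inv[OF r] obtain Wt z where Wt: "Wt \<in> E" "W \<subseteq> Wt" and xz: "(x, z) \<in> W" by auto
    from c(2) Wt s obtain W'' where W'': "W'' \<in> E" "match G R Wt \<sigma> W''" by blast
    let ?W' = "W'' \<inter> Succ G R \<sigma> W"
    have m: "match G R W \<sigma> ?W'" using restrict_match[OF W''(2) Wt(2)] .
    then obtain z' where zz: "(z, \<sigma>, z') \<in> trans R" "(x', z') \<in> ?W'"
      using xz xx unfolding match_def by blast
    have "(W, \<sigma>, ?W') \<in> trans ?S"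
      unfolding AE_trans using Wt W'' m zz xz xx s assms(3) by blast
    then show "\<exists>p'. ((W, x), \<sigma>, p') \<in> trans (sync ?S G)"
      using xx by (intro exI[of _ "(?W', x')"]) (simp add: sync_trans)
  qed
  define \<Phi> where "\<Phi> = {((W, x), z). (x, z) \<in> W \<and> W \<in> ?Es}"
  have fwd: "\<exists>p'. (snd qp, \<sigma>, p') \<in> trans R \<and> (q', p') \<in> \<Phi>"
    if qp: "qp \<in> \<Phi>" and t: "(fst qp, \<sigma>, q') \<in> trans (sync ?S G)" for qp \<sigma> q'
  proof -
    obtain W x z where qpe: "qp = ((W, x), z)" by (metis prod.collapse)
    obtain W' x' where Pair: "q' = (W', x')" by fastforce
    have t1: "(W, \<sigma>, W') \<in> trans ?S" and t2: "(x, \<sigma>, x') \<in> trans G"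
      using t qpe Pair by (auto simp: sync_trans)
    from qp qpe have xz: "(x, z) \<in> W" by (auto simp: \<Phi>_def)
    from t1 have "match G R W \<sigma> W'" "W' \<in> ?Es" unfolding AE_trans by blast+
    then obtain z' where "(z, \<sigma>, z') \<in> trans R" "(x', z') \<in> W'"
      using xz t2 unfolding match_def by blast
    then show ?thesis using Pair qpe \<open>W' \<in> ?Es\<close> by (auto simp: \<Phi>_def)
  qed
  have bwd: "\<exists>q'. (fst qp, \<sigma>, q') \<in> trans (sync ?S G) \<and> (q', z') \<in> \<Phi>"
    if qp: "qp \<in> \<Phi>" and s: "\<sigma> \<in> Evs_r" and zz: "(snd qp, \<sigma>, z') \<in> trans R" for qp \<sigma> z'
  proof -
    obtain W x z where qpe: "qp = ((W, x), z)" by (metis prod.collapse)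
    from qp qpe obtain Wt where Wt: "Wt \<in> E" "W \<subseteq> Wt" and xz: "(x, z) \<in> W"
      by (auto simp: \<Phi>_def)
    have zz': "(z, \<sigma>, z') \<in> trans R" using zz qpe by simp
    have "(x, z) \<in> Wt" using Wt xz by blast
    with c(3) Wt(1) s zz' obtain x'' W'' where
      W'': "(x, \<sigma>, x'') \<in> trans G" "W'' \<in> E" "(x'', z') \<in> W''" "match G R Wt \<sigma> W''"
      by fastforce
    let ?W' = "W'' \<inter> Succ G R \<sigma> W"
    have m: "match G R W \<sigma> ?W'" using restrict_match[OF W''(4) Wt(2)] .
    have in': "(x'', z') \<in> ?W'" using W'' xz zz' unfolding Succ_def by auto
    have "(W, \<sigma>, ?W') \<in> trans ?S"
      unfolding AE_trans using Wt W'' m in' zz' xz s assms(4) by blast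
    then show ?thesis
      using W''(1,2) in' qpe by (intro exI[of _ "(?W', x'')"]) (auto simp: sync_trans \<Phi>_def)
  qed
  have ini: "\<forall>q0\<in>init (sync ?S G). \<exists>p0\<in>init R. (q0, p0) \<in> \<Phi>"
    by (auto simp: sync_init AE_init \<Phi>_def)
  have sim: "cc_simulation Evs Evs_r (sync ?S G) R \<Phi>"
    unfolding cc_simulation_def
    using ini fwd bwd by fastforce
  show ?thesis unfolding SPR_def cc_le_def using aut adm sim by blast
qed

end
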